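(* Let $m,n,s,c$ be positive integers such that $2\leq s\leq n$ and $ms=2n$. A magic rectangle set $\mathrm{MRS}(m,n;s,2;c)$ exists if and only if $s\geq 4$ is even.
   Context: A partially filled array is an array in which some cells may be empty. A magic rectangle set with empty cells $\mathrm{MRS}(m,n;s,k;c)$ is a set of $c$ partially filled $m\times n$ arrays with integer entries such that each integer of $\{1,2,\ldots,nkc\}$ appears exactly once, in exactly one of the arrays (and no other entries occur); in every array each row contains exactly $s$ filled cells and each column exactly $k$ filled cells; and there exist integers $x,y$ such that in every array each row sums to $x$ and each column sums to $y$. *)

theory Defs
  imports Main
begin

text \<open>A set of c partially filled m x n arrays is modelled as
  A :: nat \<Rightarrow> nat \<Rightarrow> nat \<Rightarrow> nat option, where A a i j is the
  entry of array a (a < c) in row i (i < m), column j (j < n); None = empty cell.\<close>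

definition filled_cells :: "nat \<Rightarrow> nat \<Rightarrow> nat \<Rightarrow> (nat \<Rightarrow> nat \<Rightarrow> nat \<Rightarrow> nat option) \<Rightarrow> (nat \<times> nat \<times> nat) set" where
  "filled_cells m n c A = {(a, i, j). a < c \<and> i < m \<and> j < n \<and> A a i j \<noteq> None}"

definition cell_val :: "nat option \<Rightarrow> nat" where
  "cell_val v = (case v of None \<Rightarrow> 0 | Some x \<Rightarrow> x)"

definition is_MRS :: "nat \<Rightarrow> nat \<Rightarrow> nat \<Rightarrow> nat \<Rightarrow> nat \<Rightarrow> (nat \<Rightarrow> nat \<Rightarrow> nat \<Rightarrow> nat option) \<Rightarrow> bool" where
  "is_MRS m n s k c A \<longleftrightarrow>
     bij_betw (\<lambda>(a, i, j). the (A a i j)) (filled_cells m n c A) {1..n * k * c} \<and>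
     (\<forall>a<c. \<forall>i<m. card {j. j < n \<and> A a i j \<noteq> None} = s) \<and>
     (\<forall>a<c. \<forall>j<n. card {i. i < m \<and> A a i j \<noteq> None} = k) \<and>
     (\<exists>x y. (\<forall>a<c. \<forall>i<m. (\<Sum>j<n. cell_val (A a i j)) = x) \<and>
            (\<forall>a<c. \<forall>j<n. (\<Sum>i<m. cell_val (A a i j)) = y))"

definition MRS_exists :: "nat \<Rightarrow> nat \<Rightarrow> nat \<Rightarrow> nat \<Rightarrow> nat \<Rightarrow> bool" where
  "MRS_exists m n s k c \<longleftrightarrow> (\<exists>A. is_MRS m n s k c A)"

end

theory Submission
  imports Defs
begin


definition rr :: "nat \<Rightarrow> nat" where "rr t = (if even t then 0 else 3)"
definition kk :: "nat \<Rightarrow> nat \<Rightarrow> nat" where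
  "kk M g = (if even g then (g + M) div 2 else (M - 1 - g) div 2)"
definition jj :: "nat \<Rightarrow> nat \<Rightarrow> nat \<Rightarrow> nat" where
  "jj M g p = (if p = 0 then g + 1 else if p = 1 then M + 1 + kk M g else 2*M + 1 + kk M g)"
definition lo :: "nat \<Rightarrow> nat \<Rightarrow> nat \<Rightarrow> nat \<Rightarrow> nat" where
  "lo M t g p = (if p < rr t then M*t + 1 - jj M g p else M*(p - rr t) + g + 1)"
definition big :: "nat \<Rightarrow> nat \<Rightarrow> nat \<Rightarrow> bool" where
  "big t g p = (if p < rr t then p = 0 \<and> even g else odd (p - rr t))"
definition fv :: "nat \<Rightarrow> nat \<Rightarrow> nat \<Rightarrow> nat \<Rightarrow> nat" where
  "fv M t g p = (if big t g p then 2*(M*t) + 1 - lo M t g p else lo M t g p)"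

lemma kk_lt: "g < M \<Longrightarrow> kk M g < M"
  unfolding kk_def by auto

lemma kk_inj: "g < M \<Longrightarrow> g' < M \<Longrightarrow> kk M g = kk M g' \<Longrightarrow> g = g'"
  unfolding kk_def by (auto split: if_splits elim!: evenE oddE)

lemma rr_le: "2 \<le> t \<Longrightarrow> rr t \<le> t" unfolding rr_def by (auto elim!: oddE)

lemma jj_range: "g < M \<Longrightarrow> p < 3 \<Longrightarrow> 1 \<le> jj M g p \<and> jj M g p \<le> 3*M"
  using kk_lt[of g M] unfolding jj_def by auto

lemma lo_range:
  assumes "2 \<le> t" "g < M" "p < t"
  shows "1 \<le> lo M t g p \<and> lo M t g p \<le> M*t"
proof (cases "p < rr t")
  case True
  then have t3: "rr t = 3" "3 \<le> t" using assms(1) unfolding rr_def by (auto split: if_splits elim!: oddE)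
  have "3*M \<le> M*t" using t3 by simp
  then have "jj M g p \<le> M*t" "1 \<le> jj M g p" using True jj_range[OF assms(2), of p] t3 by linarith+
  then show ?thesis using True unfolding lo_def by auto
next
  case False
  have "M*(p - rr t) + g + 1 \<le> M*(p - rr t) + M" using assms by simp
  also have "\<dots> = M * (Suc (p - rr t))" by simp
  also have "\<dots> \<le> M * t" using assms False by (intro mult_le_mono2) auto
  finally show ?thesis using False unfolding lo_def by auto
qed

lemma lo_inj:
  assumes "2 \<le> t" "g < M" "p < t" "g' < M" "p' < t" "lo M t g p = lo M t g' p'"
  shows "g = g' \<and> p = p'"
proof -
  have sep: "M*(q - rr t) + h + 1 < M*t + 1 - jj M h' q'" if "q < t" "\<not> q < rr t" "q' < rr t" "h < M" "h' < M" for q q' h h'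
  proof -
    have t3: "rr t = 3" "3 \<le> t" using that assms(1) unfolding rr_def by (auto split: if_splits elim!: oddE)
    have "M*(q - 3) + h + 1 \<le> M*(t - 3)" 
    proof -
      have "M*(q-3) + h + 1 \<le> M*(q-3) + M" using that by simp
      also have "\<dots> = M*(Suc (q-3))" by simp
      also have "\<dots> \<le> M*(t-3)" using that t3 by (intro mult_le_mono2) auto
      finally show ?thesis .
    qed
    moreover have "M*(t-3) + 3*M = M*t" using t3 by (simp add: algebra_simps diff_mult_distrib2)
    ultimately show ?thesis using jj_range[OF that(5), of q'] that t3 by auto
  qed
  show ?thesis
  proof (cases "p < rr t")
    case True
    note pT = True
    have t3: "rr t = 3" "3 \<le> t" using True assms(1) unfolding rr_def by (auto split: if_splits elim!: oddE)
    show ?thesis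
    proof (cases "p' < rr t")
      case True
      have "3*M \<le> M*t" using t3 by simp
      then have "jj M g p \<le> M*t" "jj M g' p' \<le> M*t" using pT True jj_range[OF assms(2), of p] jj_range[OF assms(4), of p'] t3 by linarith+
      then have "jj M g p = jj M g' p'" using assms(6) pT True 
        unfolding lo_def by auto
      then show ?thesis using pT True t3 assms(2,4) kk_inj[OF assms(2) assms(4)] kk_lt[OF assms(2)] kk_lt[OF assms(4)]
        unfolding jj_def by (auto split: if_splits)
    next
      case False
      then show ?thesis using sep[OF assms(5) False pT assms(4) assms(2)] assms(6) pT unfolding lo_def by auto
    qed
  next
    case False
    note pF = False
    show ?thesis
    proof (cases "p' < rr t")
      case True
      then show ?thesis using sep[OF assms(3) pF True assms(2) assms(4)] assms(6) pF unfolding lo_def by auto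
    next
      case False
      then have e: "M*(p - rr t) + g = M*(p' - rr t) + g'" using assms(6) pF unfolding lo_def by auto
      have "(M*(p - rr t) + g) div M = p - rr t" "(M*(p - rr t) + g) mod M = g"
           "(M*(p' - rr t) + g') div M = p' - rr t" "(M*(p' - rr t) + g') mod M = g'"
        using assms by auto
      then show ?thesis using e pF False by (metis diff_diff_cancel le_less nat_le_linear add_diff_inverse_nat)
    qed
  qed
qed


lemma fv_cases: "fv M t g p = lo M t g p \<or> fv M t g p = 2*(M*t) + 1 - lo M t g p"
  unfolding fv_def by auto

lemma fv_range:
  assumes "2 \<le> t" "g < M" "p < t"
  shows "1 \<le> fv M t g p \<and> fv M t g p \<le> 2*(M*t)"
  using lo_range[OF assms] fv_cases[of M t g p] by auto

lemma pair_sum: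
  assumes "2 \<le> t" "g < M" "rr t + 2*u + 2 \<le> t"
  shows "fv M t g (rr t + 2*u) + fv M t g (Suc (rr t + 2*u)) = 2*(M*t) + 1 - M"
proof -
  have a: "fv M t g (rr t + 2*u) = M*(2*u) + g + 1" unfolding fv_def big_def lo_def by auto
  have b: "fv M t g (Suc (rr t + 2*u)) = 2*(M*t) + 1 - (M*(2*u+1) + g + 1)"
    unfolding fv_def big_def lo_def by auto
  have "M*(2*u+1) + g + 1 \<le> M*(2*u+2)" using assms by simp
  also have "\<dots> \<le> M*t" using assms by (intro mult_le_mono2) auto
  finally have c: "M*(2*u+1) + g + 1 \<le> M*t" .
  show ?thesis unfolding a b using c by (simp add: algebra_simps)
qed

lemma kk_even: "even g \<Longrightarrow> g < M \<Longrightarrow> 2 * kk M g + (if even M then 0 else 1) = g + M"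
  unfolding kk_def by (auto elim!: evenE oddE)
lemma kk_odd: "odd g \<Longrightarrow> g < M \<Longrightarrow> 2 * kk M g + g + 1 + (if even M then 0 else 1) = M"
  unfolding kk_def by (auto elim!: evenE oddE)

lemma triple_sum:
  assumes "odd t" "3 \<le> t" "g < M"
  shows "fv M t g 0 + fv M t g 1 + fv M t g 2 + 4*M = 3*(M*t) + (if even M then 1 else 2)"
proof -
  have r: "rr t = 3" using assms unfolding rr_def by auto
  have k: "kk M g < M" using kk_lt[OF assms(3)] .
  have P: "3*M \<le> M*t" using assms by simp
  have f1: "fv M t g 1 = M*t - M - kk M g" unfolding fv_def big_def lo_def jj_def r by auto
  have f2: "fv M t g 2 = M*t - 2*M - kk M g" unfolding fv_def big_def lo_def jj_def r by auto
  have f0: "fv M t g 0 = (if even g then M*t + g + 1 else M*t - g)"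
  proof -
    have "g \<le> M*t" using assms P by linarith
    then show ?thesis unfolding fv_def big_def lo_def jj_def r by auto
  qed
  show ?thesis
  proof (cases "even g")
    case True
    have e0: "fv M t g 0 = M*t+g+1" using f0 True by simp
    have kv: "2*kk M g + (if even M then 0 else 1) = g + M" using kk_even[OF True assms(3)] .
    show ?thesis
    proof (cases "even M")
      case True
      then have "2*kk M g = g+M" using kv by simp
      then show ?thesis unfolding if_P[OF True] using e0 f1 f2 k P by linarith
    next
      case False
      then have "2*kk M g + 1 = g+M" using kv by simp
      then show ?thesis unfolding if_not_P[OF False] using e0 f1 f2 k P by linarith
    qed
  next
    case False
    have e0: "fv M t g 0 = M*t-g" using f0 False by simp
    have kv: "2*kk M g + g + 1 + (if even M then 0 else 1) = M" using kk_odd[OF False assms(3)] .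
    have gl: "g \<le> M*t" using assms P by linarith
    show ?thesis
    proof (cases "even M")
      case True
      then have "2*kk M g + g + 1 = M" using kv by simp
      then show ?thesis unfolding if_P[OF True] using e0 f1 f2 k P gl by linarith
    next
      case False
      then have "2*kk M g + g + 2 = M" using kv by simp
      then show ?thesis unfolding if_not_P[OF False] using e0 f1 f2 k P gl by linarith
    qed
  qed
qed


definition CS :: "nat \<Rightarrow> nat \<Rightarrow> nat" where
  "CS M t = (if even t then 0 else 3*(M*t) + (if even M then 1 else 2) - 4*M) + ((t - rr t) div 2) * (2*(M*t)+1-M)"

lemma pairs_sum:
  assumes "2 \<le> t" "g < M"
  shows "rr t + 2*u \<le> t \<Longrightarrow> (\<Sum>p<rr t + 2*u. fv M t g p) = (\<Sum>p<rr t. fv M t g p) + u*(2*(M*t)+1-M)"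
proof (induction u)
  case 0
  then show ?case by simp
next
  case (Suc u)
  have e: "rr t + 2 * Suc u = Suc (Suc (rr t + 2*u))" by simp
  have "(\<Sum>p<rr t + 2 * Suc u. fv M t g p) = (\<Sum>p<rr t + 2*u. fv M t g p) + (fv M t g (rr t + 2*u) + fv M t g (Suc (rr t + 2*u)))"
    unfolding e by simp
  also have "\<dots> = (\<Sum>p<rr t. fv M t g p) + u*(2*(M*t)+1-M) + (2*(M*t)+1-M)"
    using Suc pair_sum[OF assms, of u] by simp
  finally show ?case by simp
qed

lemma class_sum:
  assumes "2 \<le> t" "g < M"
  shows "(\<Sum>p<t. fv M t g p) = CS M t"
proof -
  define u where "u = (t - rr t) div 2"
  have tu: "t = rr t + 2*u" using assms(1) unfolding u_def rr_def by (auto elim!: oddE)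
  have s: "(\<Sum>p<t. fv M t g p) = (\<Sum>p<rr t. fv M t g p) + u*(2*(M*t)+1-M)"
    using pairs_sum[OF assms, of u] tu by simp
  show ?thesis
  proof (cases "even t")
    case True
    then show ?thesis using s unfolding CS_def u_def rr_def by simp
  next
    case False
    then have r: "rr t = 3" "3 \<le> t" using assms(1) unfolding rr_def by (auto elim!: oddE)
    have "(\<Sum>p<rr t. fv M t g p) = fv M t g 0 + fv M t g 1 + fv M t g 2"
      unfolding r by (simp add: numeral_3_eq_3 numeral_2_eq_2 lessThan_Suc)
    also have "\<dots> = 3*(M*t) + (if even M then 1 else 2) - 4*M"
      using triple_sum[OF False r(2) assms(2)] by linarith
    finally show ?thesis using s False unfolding CS_def u_def by simp
  qed
qed




lemma lo_image:
  assumes "2 \<le> t"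
  shows "(\<lambda>(g,p). lo M t g p) ` ({..<M} \<times> {..<t}) = {1..M*t}"
proof -
  let ?f = "\<lambda>(g,p). lo M t g p"
  have inj: "inj_on ?f ({..<M} \<times> {..<t})"
    unfolding inj_on_def using lo_inj[OF assms] by auto
  have sub: "?f ` ({..<M} \<times> {..<t}) \<subseteq> {1..M*t}"
    using lo_range[OF assms] by auto
  have "card (?f ` ({..<M} \<times> {..<t})) = M*t"
    using card_image[OF inj] by (simp add: card_cartesian_product)
  then show ?thesis using card_subset_eq[OF _ sub] by simp
qed

definition succ :: "nat \<Rightarrow> nat \<Rightarrow> nat" where "succ m i = (if Suc i = m then 0 else Suc i)"
definition pred :: "nat \<Rightarrow> nat \<Rightarrow> nat" where "pred m r = (if r = 0 then m - 1 else r - 1)"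

lemma succ_lt: "i < m \<Longrightarrow> succ m i < m" unfolding succ_def by auto
lemma succ_neq: "2 \<le> m \<Longrightarrow> i < m \<Longrightarrow> succ m i \<noteq> i" unfolding succ_def by auto
lemma succ_eq_iff: "i < m \<Longrightarrow> r < m \<Longrightarrow> (r = succ m i) = (i = pred m r)"
  unfolding succ_def pred_def by auto
lemma pred_lt: "r < m \<Longrightarrow> pred m r < m" unfolding pred_def by auto
lemma pred_neq: "2 \<le> m \<Longrightarrow> r < m \<Longrightarrow> pred m r \<noteq> r" unfolding pred_def by auto

definition Arr :: "nat \<Rightarrow> nat \<Rightarrow> nat \<Rightarrow> nat \<Rightarrow> nat \<Rightarrow> nat \<Rightarrow> nat option" where
  "Arr m t c a row j = (let i = j div t; v = fv (m*c) t (a*m + j div t) (j mod t) in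
     if row = i then Some v else if row = succ m i then Some (2*((m*c)*t) + 1 - v) else None)"

lemma div_block: "0 < (t::nat) \<Longrightarrow> (j div t = i) = (i*t \<le> j \<and> j < i*t + t)"
proof
  assume t: "0 < t" and e: "j div t = i"
  have "j = i*t + j mod t" using e by (metis div_mult_mod_eq)
  moreover have "j mod t < t" using t by simp
  ultimately show "i*t \<le> j \<and> j < i*t + t" by linarith
next
  assume t: "0 < t" and h: "i*t \<le> j \<and> j < i*t + t"
  show "j div t = i" using h by (intro div_nat_eqI) (auto simp: mult.commute)
qed




lemma cell_Arr:
  assumes "2 \<le> m"
  shows "cell_val (Arr m t c a row j) =
     (if row = j div t then fv (m*c) t (a*m + j div t) (j mod t) else 0) +
     (if row = succ m (j div t) then 2*((m*c)*t) + 1 - fv (m*c) t (a*m + j div t) (j mod t) else 0)"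
proof -
  have "succ m (j div t) \<noteq> j div t" if "j div t < m" using succ_neq[OF assms that] .
  show ?thesis unfolding Arr_def Let_def cell_val_def succ_def using assms by auto
qed

lemma group_sum:
  fixes F :: "nat \<Rightarrow> nat"
  shows "(\<Sum>j<m*t. F j) = (\<Sum>i<m. \<Sum>p<t. F (i*t + p))"
proof -
  have "(\<Sum>j<m*t. F j) = (\<Sum>i<m. sum F {i*t..<i*t+t})" using sum.nat_group[where g=F and n=m and k=t] by simp
  also have "\<dots> = (\<Sum>i<m. \<Sum>p<t. F (i*t + p))"
  proof (rule sum.cong[OF refl])
    fix i
    have "sum F {i*t..<i*t+t} = sum F ((\<lambda>p. i*t + p) ` {..<t})"
      by (simp add: lessThan_atLeast0 image_add_atLeastLessThan add.commute)
    also have "\<dots> = (\<Sum>p<t. F (i*t + p))" by (subst sum.reindex) (auto simp: inj_on_def)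
    finally show "sum F {i*t..<i*t+t} = (\<Sum>p<t. F (i*t + p))" .
  qed
  finally show ?thesis .
qed

lemma row_sum:
  assumes m: "2 \<le> m" and t: "2 \<le> t" and a: "a < c" and r: "row < m"
  shows "(\<Sum>j<m*t. cell_val (Arr m t c a row j)) = t * (2*((m*c)*t) + 1)"
proof -
  let ?M = "m*c"
  let ?N1 = "2*((m*c)*t) + 1"
  let ?f = "\<lambda>i p. fv ?M t (a*m + i) p"
  have gM: "a*m + i < ?M" if "i < m" for i
  proof -
    have "a*m + i < a*m + m" using that by simp
    also have "\<dots> = (a+1)*m" by simp
    also have "\<dots> \<le> c*m" using a by (intro mult_le_mono1) auto
    finally show ?thesis by (simp add: mult.commute)
  qed
  have dm: "(i*t + p) div t = i" "(i*t + p) mod t = p" if "p < t" for i p using that t by auto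
  have "(\<Sum>j<m*t. cell_val (Arr m t c a row j)) =
     (\<Sum>i<m. \<Sum>p<t. (if row = i then ?f i p else 0) + (if row = succ m i then ?N1 - ?f i p else 0))"
    unfolding group_sum by (intro sum.cong refl) (simp add: cell_Arr[OF m] dm)
  also have "\<dots> = (\<Sum>i<m. (if row = i then (\<Sum>p<t. ?f i p) else 0)) + (\<Sum>i<m. (if i = pred m row then (\<Sum>p<t. ?N1 - ?f i p) else 0))"
    unfolding sum.distrib[symmetric]
  proof (intro sum.cong refl)
    fix i assume "i \<in> {..<m}"
    then have "(row = succ m i) = (i = pred m row)" using succ_eq_iff r by auto
    then show "(\<Sum>p<t. (if row = i then ?f i p else 0) + (if row = succ m i then ?N1 - ?f i p else 0)) =
      (if row = i then (\<Sum>p<t. ?f i p) else 0) + (if i = pred m row then (\<Sum>p<t. ?N1 - ?f i p) else 0)"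
      by (simp add: sum.distrib)
  qed
  also have "\<dots> = (\<Sum>p<t. ?f row p) + (\<Sum>p<t. ?N1 - ?f (pred m row) p)"
    using r pred_lt[OF r] by simp
  also have "\<dots> = t * ?N1"
  proof -
    have le: "?f (pred m row) p \<le> ?N1" if "p < t" for p
      using fv_range[OF t gM[OF pred_lt[OF r]] that] by simp
    have "(\<Sum>p<t. ?N1 - ?f (pred m row) p) + (\<Sum>p<t. ?f (pred m row) p) = (\<Sum>p<t. ?N1)"
      unfolding sum.distrib[symmetric] using le by (intro sum.cong) auto
    moreover have "(\<Sum>p<t. ?f (pred m row) p) = CS ?M t" using class_sum[OF t gM[OF pred_lt[OF r]]] .
    moreover have "(\<Sum>p<t. ?f row p) = CS ?M t" using class_sum[OF t gM[OF r]] .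
    ultimately show ?thesis by simp
  qed
  finally show ?thesis .
qed

lemma col_sum:
  assumes m: "2 \<le> m" and t: "2 \<le> t" and a: "a < c" and j: "j < m*t"
  shows "(\<Sum>row<m. cell_val (Arr m t c a row j)) = 2*((m*c)*t) + 1"
proof -
  let ?v = "fv (m*c) t (a*m + j div t) (j mod t)"
  have i: "j div t < m" using j by (simp add: less_mult_imp_div_less)
  have gM: "a*m + j div t < m*c"
  proof -
    have "a*m + j div t < a*m + m" using i by simp
    also have "\<dots> = (a+1)*m" by simp
    also have "\<dots> \<le> c*m" using a by (intro mult_le_mono1) auto
    finally show ?thesis by (simp add: mult.commute)
  qed
  have le: "?v \<le> 2*((m*c)*t) + 1" using fv_range[OF t gM, of "j mod t"] t by simp
  have "(\<Sum>row<m. cell_val (Arr m t c a row j)) = (\<Sum>row<m. (if row = j div t then ?v else 0)) + (\<Sum>row<m. (if row = succ m (j div t) then 2*((m*c)*t) + 1 - ?v else 0))"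
    unfolding sum.distrib[symmetric] cell_Arr[OF m] by simp
  also have "\<dots> = ?v + (2*((m*c)*t) + 1 - ?v)" using i succ_lt[OF i] by simp
  finally show ?thesis using le by simp
qed




lemma Arr_None: "(Arr m t c a row j \<noteq> None) = (row = j div t \<or> row = succ m (j div t))"
  unfolding Arr_def Let_def by auto

lemma blk:
  assumes "0 < (t::nat)" "i < m"
  shows "{j. j < m*t \<and> j div t = i} = {i*t..<i*t+t}"
proof -
  have "Suc i * t \<le> m*t" using assms by (intro mult_le_mono1) simp
  then have "i*t + t \<le> m*t" by simp
  then show ?thesis using div_block[OF assms(1)] by auto
qed

lemma row_card:
  assumes m: "2 \<le> m" and t: "2 \<le> t" and r: "row < m"
  shows "card {j. j < m*t \<and> Arr m t c a row j \<noteq> None} = 2*t"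
proof -
  have t0: "0 < t" using t by simp
  have "{j. j < m*t \<and> Arr m t c a row j \<noteq> None} = {j. j < m*t \<and> j div t = row} \<union> {j. j < m*t \<and> j div t = pred m row}"
  proof -
    have "(row = succ m (j div t)) = (j div t = pred m row)" if "j < m*t" for j
      using succ_eq_iff[OF _ r] that by (simp add: less_mult_imp_div_less)
    then show ?thesis unfolding Arr_None by auto
  qed
  also have "\<dots> = {row*t..<row*t+t} \<union> {pred m row * t..<pred m row * t + t}"
    using blk[OF t0 r] blk[OF t0 pred_lt[OF r]] by simp
  also have "card \<dots> = t + t"
  proof (rule trans[OF card_Un_disjoint])
    show "{row * t..<row * t + t} \<inter> {pred m row * t..<pred m row * t + t} = {}"
    proof (rule ccontr)
      assume "{row * t..<row * t + t} \<inter> {pred m row * t..<pred m row * t + t} \<noteq> {}"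
      then obtain j where "j \<in> {row * t..<row * t + t}" "j \<in> {pred m row * t..<pred m row * t + t}" by blast
      then have "j div t = row" "j div t = pred m row" using div_block[OF t0] by auto
      then show False using pred_neq[OF m r] by simp
    qed
  qed auto
  finally show ?thesis by simp
qed

lemma col_card:
  assumes m: "2 \<le> m" and t: "2 \<le> t" and j: "j < m*t"
  shows "card {row. row < m \<and> Arr m t c a row j \<noteq> None} = 2"
proof -
  have i: "j div t < m" using j by (simp add: less_mult_imp_div_less)
  have "{row. row < m \<and> Arr m t c a row j \<noteq> None} = {j div t, succ m (j div t)}"
    unfolding Arr_None using i succ_lt[OF i] by auto
  then show ?thesis using succ_neq[OF m i] by simp
qed




lemma gM_lemma: "a < c \<Longrightarrow> i < m \<Longrightarrow> a*m + i < m*(c::nat)"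
proof -
  assume a: "a < c" and i: "i < m"
  have "a*m + i < a*m + m" using i by simp
  also have "\<dots> = (a+1)*m" by simp
  also have "\<dots> \<le> c*m" using a by (intro mult_le_mono1) auto
  finally show ?thesis by (simp add: mult.commute)
qed

lemma cell_info:
  assumes m: "2 \<le> m" and t: "2 \<le> t" and x: "(a, row, j) \<in> filled_cells m (m*t) c (Arr m t c)"
  shows "a < c" "row < m" "j < m*t" "j div t < m" "a*m + j div t < m*c" "j mod t < t"
    "(the (Arr m t c a row j) = fv (m*c) t (a*m + j div t) (j mod t) \<and> row = j div t) \<or>
     (the (Arr m t c a row j) = 2*((m*c)*t) + 1 - fv (m*c) t (a*m + j div t) (j mod t) \<and> row = succ m (j div t) \<and> row \<noteq> j div t)"
proof -
  show a: "a < c" and "row < m" and j: "j < m*t" using x unfolding filled_cells_def by auto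
  show i: "j div t < m" using j by (simp add: less_mult_imp_div_less)
  show "a*m + j div t < m*c" using gM_lemma[OF a i] .
  show "j mod t < t" using t by simp
  have "Arr m t c a row j \<noteq> None" using x unfolding filled_cells_def by auto
  then show "(the (Arr m t c a row j) = fv (m*c) t (a*m + j div t) (j mod t) \<and> row = j div t) \<or>
     (the (Arr m t c a row j) = 2*((m*c)*t) + 1 - fv (m*c) t (a*m + j div t) (j mod t) \<and> row = succ m (j div t) \<and> row \<noteq> j div t)"
    unfolding Arr_def Let_def by (auto split: if_splits)
qed

lemma Arr_bij:
  assumes m: "2 \<le> m" and t: "2 \<le> t"
  shows "bij_betw (\<lambda>(a, i, j). the (Arr m t c a i j)) (filled_cells m (m*t) c (Arr m t c)) {1..m*t*2*c}"
proof -
  let ?F = "filled_cells m (m*t) c (Arr m t c)"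
  let ?h = "\<lambda>(a, i, j). the (Arr m t c a i j)"
  let ?P = "(m*c)*t"
  have NP: "m*t*2*c = 2*?P" by (simp add: algebra_simps)
  have lov: "?h x = lo (m*c) t (a*m + j div t) (j mod t) \<or> ?h x = 2*?P + 1 - lo (m*c) t (a*m + j div t) (j mod t)"
    if "x = (a,row,j)" "x \<in> ?F" for x a row j
  proof -
    note ci = cell_info[OF m t that(2)[unfolded that(1)]]
    have "lo (m*c) t (a*m + j div t) (j mod t) \<le> ?P" using lo_range[OF t ci(5) ci(6)] by simp
    then show ?thesis using ci(7) fv_cases[of "m*c" t "a*m + j div t" "j mod t"] that(1) by auto
  qed
  have inj: "inj_on ?h ?F"
  proof (rule inj_onI)
    fix x y assume x: "x \<in> ?F" and y: "y \<in> ?F" and e: "?h x = ?h y"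
    obtain a row j where xe: "x = (a,row,j)" by (cases x) auto
    obtain a' row' j' where ye: "y = (a',row',j')" by (cases y) auto
    note cx = cell_info[OF m t x[unfolded xe]]
    note cy = cell_info[OF m t y[unfolded ye]]
    let ?g = "a*m + j div t" and ?p = "j mod t" and ?g' = "a'*m + j' div t" and ?p' = "j' mod t"
    have r1: "1 \<le> lo (m*c) t ?g ?p \<and> lo (m*c) t ?g ?p \<le> ?P" using lo_range[OF t cx(5) cx(6)] by simp
    have r2: "1 \<le> lo (m*c) t ?g' ?p' \<and> lo (m*c) t ?g' ?p' \<le> ?P" using lo_range[OF t cy(5) cy(6)] by simp
    have "lo (m*c) t ?g ?p = lo (m*c) t ?g' ?p'"
      using lov[OF xe x] lov[OF ye y] e r1 r2 by auto
    then have gp: "?g = ?g' \<and> ?p = ?p'" using lo_inj[OF t cx(5) cx(6) cy(5) cy(6)] by blast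
    have "?g div m = a" "?g mod m = j div t" using cx(4) by auto
    moreover have "?g' div m = a'" "?g' mod m = j' div t" using cy(4) by auto
    ultimately have aa: "a = a'" and dd: "j div t = j' div t" using gp by metis+
    have jj': "j = j'" using dd gp by (metis div_mult_mod_eq)
    have "row = row'"
    proof (rule ccontr)
      assume ne: "row \<noteq> row'"
      let ?v = "fv (m*c) t ?g ?p"
      have "?v = 2*?P + 1 - ?v" using cx(7) cy(7) e xe ye aa jj' ne by auto
      moreover have "?v \<le> 2*?P" using fv_range[OF t cx(5) cx(6)] by simp
      ultimately show False by presburger
    qed
    then show "x = y" using xe ye aa jj' by simp
  qed
  have sub: "?h ` ?F \<subseteq> {1..m*t*2*c}"
  proof
    fix w assume "w \<in> ?h ` ?F"
    then obtain x where x: "x \<in> ?F" "w = ?h x" by blast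
    obtain a row j where xe: "x = (a,row,j)" by (cases x) auto
    note cx = cell_info[OF m t x(1)[unfolded xe]]
    have "1 \<le> fv (m*c) t (a*m + j div t) (j mod t) \<and> fv (m*c) t (a*m + j div t) (j mod t) \<le> 2*?P"
      using fv_range[OF t cx(5) cx(6)] by simp
    moreover have "w = the (Arr m t c a row j)" using x(2) xe by simp
    ultimately have "1 \<le> w \<and> w \<le> 2*?P" using cx(7) by auto
    then show "w \<in> {1..m*t*2*c}" unfolding NP by simp
  qed
  have sup: "{1..m*t*2*c} \<subseteq> ?h ` ?F"
  proof
    fix v assume v: "v \<in> {1..m*t*2*c}"
    define w where "w = (if v \<le> ?P then v else 2*?P + 1 - v)"
    have v2: "1 \<le> v" "v \<le> 2*?P" using v unfolding NP by auto
    have w: "w \<in> {1..?P}" unfolding w_def using v2 by auto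
    then have "w \<in> (\<lambda>(g,p). lo (m*c) t g p) ` ({..<m*c} \<times> {..<t})" using lo_image[OF t, of "m*c"] by simp
    then obtain gp0 where gp0: "gp0 \<in> {..<m*c} \<times> {..<t}" "w = (\<lambda>(g,p). lo (m*c) t g p) gp0" by blast
    obtain g p where "gp0 = (g,p)" by (cases gp0) auto
    then have gp: "g < m*c" "p < t" "lo (m*c) t g p = w" using gp0 by auto
    define a where "a = g div m"
    define i where "i = g mod m"
    define j where "j = i*t + p"
    have m0: "0 < m" using m by simp
    have i: "i < m" unfolding i_def using m0 by simp
    have a: "a < c" unfolding a_def using gp(1) by (simp add: less_mult_imp_div_less mult.commute)
    have jd: "j div t = i" "j mod t = p" unfolding j_def using gp(2) by auto
    have gg: "a*m + i = g" unfolding a_def i_def by (simp add: mult.commute)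
    have jl: "j < m*t"
    proof -
      have "j < i*t + t" unfolding j_def using gp(2) by simp
      also have "\<dots> = Suc i * t" by simp
      also have "\<dots> \<le> m*t" using i by (intro mult_le_mono1) simp
      finally show ?thesis .
    qed
    let ?v = "fv (m*c) t g p"
    have vv: "v = w \<or> v = 2*?P + 1 - w" using v2 unfolding w_def by auto
    have fw: "?v = w \<or> ?v = 2*?P + 1 - w" using fv_cases[of "m*c" t g p] gp(3) by auto
    have wle: "w \<le> ?P" using w by simp
    show "v \<in> ?h ` ?F"
    proof (cases "?v = v")
      case True
      have A: "Arr m t c a i j = Some v" unfolding Arr_def Let_def jd gg using True by simp
      then have "(a,i,j) \<in> ?F" unfolding filled_cells_def using a i jl by simp
      then show ?thesis using A by (intro image_eqI[of _ _ "(a,i,j)"]) auto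
    next
      case False
      then have "2*?P + 1 - ?v = v" using vv fw wle by auto
      then have A: "Arr m t c a (succ m i) j = Some v" unfolding Arr_def Let_def jd gg using succ_neq[OF m i] by simp
      then have "(a,succ m i,j) \<in> ?F" unfolding filled_cells_def using a succ_lt[OF i] jl by simp
      then show ?thesis using A by (intro image_eqI[of _ _ "(a,succ m i,j)"]) auto
    qed
  qed
  show ?thesis unfolding bij_betw_def using inj sub sup by blast
qed




lemma Arr_MRS:
  assumes m: "2 \<le> m" and t: "2 \<le> t"
  shows "is_MRS m (m*t) (2*t) 2 c (Arr m t c)"
  unfolding is_MRS_def
proof (intro conjI allI impI)
  show "bij_betw (\<lambda>(a, i, j). the (Arr m t c a i j)) (filled_cells m (m*t) c (Arr m t c)) {1..m*t*2*c}"
    using Arr_bij[OF m t] .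
next
  fix a i assume "a < c" "i < m"
  then show "card {j. j < m*t \<and> Arr m t c a i j \<noteq> None} = 2*t" using row_card[OF m t] by simp
next
  fix a j assume "a < c" "j < m*t"
  then show "card {i. i < m \<and> Arr m t c a i j \<noteq> None} = 2" using col_card[OF m t] by simp
next
  show "\<exists>x y. (\<forall>a<c. \<forall>i<m. (\<Sum>j<m*t. cell_val (Arr m t c a i j)) = x) \<and>
            (\<forall>a<c. \<forall>j<m*t. (\<Sum>i<m. cell_val (Arr m t c a i j)) = y)"
    using row_sum[OF m t] col_sum[OF m t] by blast
qed

lemma gauss2: "2 * (\<Sum>v\<in>{1..N}. v) = N * (N + 1::nat)"
  by (induction N) (auto simp: algebra_simps)

lemma two_sum:
  fixes f :: "nat \<Rightarrow> nat option"
  assumes "{k. k < n \<and> f k \<noteq> None} = {p, q}" "p \<noteq> q"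
  shows "(\<Sum>k<n. cell_val (f k)) = cell_val (f p) + cell_val (f q)"
proof -
  have pq: "p < n" "q < n" using assms(1) by auto
  have "(\<Sum>k<n. cell_val (f k)) = (\<Sum>k\<in>{p,q}. cell_val (f k))"
  proof (rule sum.mono_neutral_right)
    show "\<forall>k\<in>{..<n} - {p, q}. cell_val (f k) = 0"
    proof
      fix k assume "k \<in> {..<n} - {p,q}"
      then have "f k = None" using assms(1) by blast
      then show "cell_val (f k) = 0" unfolding cell_val_def by simp
    qed
  qed (use pq in auto)
  then show ?thesis using assms(2) by simp
qed

lemma card2_other:
  assumes "card S = 2" "a \<in> S"
  shows "\<exists>b. b \<noteq> a \<and> S = {a, b}"
proof -
  obtain x y where "S = {x,y}" "x \<noteq> y" using assms(1) by (auto simp: card_2_iff)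
  then show ?thesis using assms(2) by auto
qed


lemma total_nested:
  "(\<Sum>x\<in>filled_cells m n c A. (\<lambda>(a, i, j). the (A a i j)) x) =
   (\<Sum>a<c. \<Sum>i<m. \<Sum>j<n. cell_val (A a i j))"
proof -
  have e1: "(\<Sum>a<c. \<Sum>i<m. \<Sum>j<n. cell_val (A a i j)) = (\<Sum>x\<in>{..<c}\<times>({..<m}\<times>{..<n}). (\<lambda>(a, i, j). cell_val (A a i j)) x)"
    by (simp add: sum.cartesian_product split_def)
  have e2: "(\<Sum>x\<in>{..<c}\<times>({..<m}\<times>{..<n}). (\<lambda>(a, i, j). cell_val (A a i j)) x) = (\<Sum>x\<in>filled_cells m n c A. (\<lambda>(a, i, j). cell_val (A a i j)) x)"
  proof (rule sum.mono_neutral_right)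
    show "filled_cells m n c A \<subseteq> {..<c}\<times>({..<m}\<times>{..<n})" unfolding filled_cells_def by auto
    show "\<forall>x\<in>{..<c}\<times>({..<m}\<times>{..<n}) - filled_cells m n c A. (\<lambda>(a, i, j). cell_val (A a i j)) x = 0"
      unfolding filled_cells_def cell_val_def by (auto split: option.splits)
  qed auto
  have e3: "(\<Sum>x\<in>filled_cells m n c A. (\<lambda>(a, i, j). cell_val (A a i j)) x) = (\<Sum>x\<in>filled_cells m n c A. (\<lambda>(a, i, j). the (A a i j)) x)"
    by (intro sum.cong) (auto simp: filled_cells_def cell_val_def)
  show ?thesis using e1 e2 e3 by simp
qed

lemma MRS_even:
  assumes "is_MRS m n s k c A" "m > 0" "n > 0" "c > 0" "m * s = 2 * n" "k = 2"
  shows "even s"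
proof -
  obtain x y where xy: "\<forall>a<c. \<forall>i<m. (\<Sum>j<n. cell_val (A a i j)) = x"
    using assms(1) unfolding is_MRS_def by blast
  have bij: "bij_betw (\<lambda>(a, i, j). the (A a i j)) (filled_cells m n c A) {1..n * k * c}"
    using assms(1) unfolding is_MRS_def by blast
  have "(\<Sum>x\<in>filled_cells m n c A. (\<lambda>(a, i, j). the (A a i j)) x) = (\<Sum>v\<in>{1..n*k*c}. v)"
    using sum.reindex_bij_betw[OF bij, of "\<lambda>v. v"] by simp
  moreover have "(\<Sum>a<c. \<Sum>i<m. \<Sum>j<n. cell_val (A a i j)) = c*(m*x)" using xy by simp
  ultimately have e: "2*(c*(m*x)) = (n*2*c)*(n*2*c+1)" using total_nested[where A=A and m=m and n=n and c=c] gauss2[of "n*k*c"] assms(6) by simp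
  define N where "N = 2*n*c + 1"
  have "c*(m*x) = c*(n*N)" using e unfolding N_def by (simp add: algebra_simps)
  then have "m*x = n*N" using assms(4) by simp
  then have "s*(m*x) = s*(n*N)" by simp
  then have "(m*s)*x = n*(s*N)" by (simp add: algebra_simps)
  then have "n*(2*x) = n*(s*N)" using assms(5) by (simp add: algebra_simps)
  then have "2*x = s*N" using assms(3) by simp
  then have "even (s*N)" by presburger
  moreover have "odd N" unfolding N_def by simp
  ultimately show ?thesis by simp
qed

lemma MRS_not2:
  assumes "is_MRS m n 2 2 c A" "m > 0" "c > 0" "m = n"
  shows False
proof -
  obtain x y where xy: "\<forall>a<c. \<forall>i<m. (\<Sum>j<n. cell_val (A a i j)) = x"
      "\<forall>a<c. \<forall>j<n. (\<Sum>i<m. cell_val (A a i j)) = y"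
    using assms(1) unfolding is_MRS_def by blast
  have bij: "bij_betw (\<lambda>(a, i, j). the (A a i j)) (filled_cells m n c A) {1..n * 2 * c}"
    using assms(1) unfolding is_MRS_def by blast
  have rc: "\<forall>a<c. \<forall>i<m. card {j. j < n \<and> A a i j \<noteq> None} = 2"
   and cc: "\<forall>a<c. \<forall>j<n. card {i. i < m \<and> A a i j \<noteq> None} = 2"
    using assms(1) unfolding is_MRS_def by blast+
  have "(\<Sum>i<m. \<Sum>j<n. cell_val (A 0 i j)) = m*x" using xy(1) assms(3) by simp
  moreover have "(\<Sum>i<m. \<Sum>j<n. cell_val (A 0 i j)) = (\<Sum>j<n. \<Sum>i<m. cell_val (A 0 i j))" by (rule sum.swap)
  moreover have "(\<Sum>j<n. \<Sum>i<m. cell_val (A 0 i j)) = n*y" using xy(2) assms(3) by simp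
  ultimately have "x = y" using assms(2,4) by simp
  have "card {j. j < n \<and> A 0 0 j \<noteq> None} = 2" using rc assms(2,3) by simp
  then have "{j. j < n \<and> A 0 0 j \<noteq> None} \<noteq> {}" by (metis card.empty zero_neq_numeral)
  then obtain j0 where j0: "j0 < n" "A 0 0 j0 \<noteq> None" by blast
  have "card {i. i < m \<and> A 0 i j0 \<noteq> None} = 2" using cc j0 assms(3) by simp
  then obtain i1 where i1: "i1 \<noteq> 0" "{i. i < m \<and> A 0 i j0 \<noteq> None} = {0, i1}"
    using card2_other[of "{i. i < m \<and> A 0 i j0 \<noteq> None}" 0] j0 assms(2) by auto
  have i1m: "i1 < m" using i1 by blast
  have "card {j. j < n \<and> A 0 i1 j \<noteq> None} = 2" using rc i1m assms(3) by simp
  moreover have "j0 \<in> {j. j < n \<and> A 0 i1 j \<noteq> None}" using i1 j0 by blast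
  ultimately obtain j1 where j1: "j1 \<noteq> j0" "{j. j < n \<and> A 0 i1 j \<noteq> None} = {j0, j1}"
    using card2_other by metis
  have cs: "cell_val (A 0 0 j0) + cell_val (A 0 i1 j0) = y"
    using two_sum[of m "\<lambda>i. A 0 i j0", OF i1(2)] i1(1) xy(2) assms(3) j0 by auto
  have rs: "cell_val (A 0 i1 j0) + cell_val (A 0 i1 j1) = x"
    using two_sum[of n "\<lambda>j. A 0 i1 j", OF j1(2)] j1(1) xy(1) assms(3) i1m by auto
  have eqv: "cell_val (A 0 i1 j1) = cell_val (A 0 0 j0)" using cs rs \<open>x = y\<close> by simp
  have j1n: "j1 < n" "A 0 i1 j1 \<noteq> None" using j1 by blast+
  have f1: "(0, i1, j1) \<in> filled_cells m n c A" unfolding filled_cells_def using assms(3) i1m j1n by simp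
  have f0: "(0, 0, j0) \<in> filled_cells m n c A" unfolding filled_cells_def using assms(2,3) j0 by simp
  have "the (A 0 i1 j1) = the (A 0 0 j0)" using eqv j1n(2) j0(2) unfolding cell_val_def by (auto split: option.splits)
  then have "(0, i1, j1) = (0::nat, 0::nat, j0)"
    using bij_betw_imp_inj_on[OF bij] f0 f1 unfolding inj_on_def by fastforce
  then show False using i1(1) by simp
qed

theorem mainTheorem5:
  fixes m n s c :: nat
  assumes "m > 0" "n > 0" "s > 0" "c > 0" "2 \<le> s" "s \<le> n" "m * s = 2 * n"
  shows "MRS_exists m n s 2 c \<longleftrightarrow> (s \<ge> 4 \<and> even s)"
proof
  assume "MRS_exists m n s 2 c"
  then obtain A where A: "is_MRS m n s 2 c A" unfolding MRS_exists_def by blast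
  have ev: "even s" using MRS_even[OF A assms(1,2,4,7)] by simp
  have "s \<noteq> 2"
  proof
    assume "s = 2"
    then show False using MRS_not2[of m n c A] A assms by simp
  qed
  then show "s \<ge> 4 \<and> even s" using ev assms(5) by presburger
next
  assume h: "s \<ge> 4 \<and> even s"
  define t where "t = s div 2"
  have st: "s = 2*t" using h unfolding t_def by simp
  have t2: "2 \<le> t" using h st by simp
  have nmt: "n = m*t" using assms(7) st by simp
  have m2: "2 \<le> m"
  proof (rule ccontr)
    assume "\<not> 2 \<le> m"
    then have "m = 1" using assms(1) by simp
    then show False using assms(6,7) assms(2) by simp
  qed
  show "MRS_exists m n s 2 c" unfolding MRS_exists_def nmt st using Arr_MRS[OF m2 t2] by blast
qed


end
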